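(* For all positive integers $N$ and $Z<N^2$ there exist matrices $A$ and $C$ with $\mathrm{nnz}(A),\mathrm{nnz}(C) \leq N$, $\mathrm{nnz}(AC) \leq Z$, such that computing $AC$ in the semiring I/O model requires $\Omega \left(\min \left( \frac{N^2}{MB},\frac{N\sqrt{Z}}{\sqrt{M} B} \right) \right)$ I/Os.
   Context: $\mathrm{nnz}(X)$ denotes the number of nonzero entries of a matrix $X$. The semiring I/O model: an external memory model with internal memory of $M$ words and disk blocks of $B$ words, cost measured in block transfers (I/Os); a memory block holds up to $B$ matrix entries (semiring elements, with coordinates); semiring elements can only be copied, multiplied and added, with no other operations (no division, subtraction, or equality test). The algorithm must work for every semiring and arbitrary values of the nonzero input entries. *)

theory Defs
  imports Complex_Main "HOL-Library.Multiset"
begin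

text \<open>A sparse matrix is represented by the set of coordinates of its nonzero
  entries; nnz is the cardinality of this set. Since the input values are arbitrary
  semiring elements, the nonzero pattern of AC is the structural one.\<close>

definition prod_pattern :: "(nat \<times> nat) set \<Rightarrow> (nat \<times> nat) set \<Rightarrow> (nat \<times> nat) set" where
  "prod_pattern A C = {(i, k). \<exists>j. (i, j) \<in> A \<and> (j, k) \<in> C}"

text \<open>Input variables: Inl (i,j) is the entry a_ij of A, Inr (j,k) the entry c_jk of C.
  An algorithm is correct for every semiring and all input values iff it is correct
  in the free semiring over these variables, whose elements are multisets of words.\<close>

type_synonym var = "(nat \<times> nat) + (nat \<times> nat)"
type_synonym fsr = "var list multiset"

definition fadd :: "fsr \<Rightarrow> fsr \<Rightarrow> fsr" where
  "fadd p q = p + q"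

definition fmul :: "fsr \<Rightarrow> fsr \<Rightarrow> fsr" where
  "fmul p q = (\<Sum>x\<in>#p. image_mset (\<lambda>y. x @ y) q)"

definition input_vars :: "(nat \<times> nat) set \<Rightarrow> (nat \<times> nat) set \<Rightarrow> var set" where
  "input_vars A C = Inl ` A \<union> Inr ` C"

definition target :: "(nat \<times> nat) set \<Rightarrow> (nat \<times> nat) set \<Rightarrow> nat \<Rightarrow> nat \<Rightarrow> fsr" where
  "target A C i k = (\<Sum>j\<in>{j. (i, j) \<in> A \<and> (j, k) \<in> C}. {# [Inl (i, j), Inr (j, k)] #})"

text \<open>Internal memory: cells addressed by nat, at most M of them occupied.
  Disk: blocks addressed by nat, each with B slots (offsets < B).\<close>

type_synonym mem = "nat \<Rightarrow> fsr option"
type_synonym disk = "nat \<Rightarrow> nat \<Rightarrow> fsr option"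
type_synonym state = "mem \<times> disk"

datatype instr =
    Read nat "nat \<Rightarrow> nat"    \<comment> \<open>read disk block b; slot t goes to memory cell f t\<close>
  | Write nat "nat \<Rightarrow> nat"   \<comment> \<open>write block b; slot t receives memory cell f t\<close>
  | Add nat nat nat
  | Mul nat nat nat
  | Copy nat nat
  | Del nat

fun exec_instr :: "nat \<Rightarrow> state \<Rightarrow> instr \<Rightarrow> state option" where
  "exec_instr B (m, d) (Read b f) =
     (if inj_on f {..<B} then
        Some (\<lambda>a. if a \<in> f ` {t. t < B \<and> d b t \<noteq> None}
                   then d b (the_inv_into {..<B} f a) else m a, d)
      else None)"
| "exec_instr B (m, d) (Write b f) =
     Some (m, d(b := (\<lambda>t. if t < B then m (f t) else None)))"
| "exec_instr B (m, d) (Add x y z) =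
     (case (m x, m y) of (Some u, Some v) \<Rightarrow> Some (m(z := Some (fadd u v)), d) | _ \<Rightarrow> None)"
| "exec_instr B (m, d) (Mul x y z) =
     (case (m x, m y) of (Some u, Some v) \<Rightarrow> Some (m(z := Some (fmul u v)), d) | _ \<Rightarrow> None)"
| "exec_instr B (m, d) (Copy x z) =
     (case m x of Some u \<Rightarrow> Some (m(z := Some u), d) | None \<Rightarrow> None)"
| "exec_instr B (m, d) (Del x) = Some (m(x := None), d)"

definition mem_ok :: "nat \<Rightarrow> state \<Rightarrow> bool" where
  "mem_ok M s \<longleftrightarrow> finite {a. fst s a \<noteq> None} \<and> card {a. fst s a \<noteq> None} \<le> M"

fun run :: "nat \<Rightarrow> nat \<Rightarrow> state \<Rightarrow> instr list \<Rightarrow> state option" where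
  "run M B s [] = Some s"
| "run M B s (i # is) =
     (case exec_instr B s i of
        None \<Rightarrow> None
      | Some s' \<Rightarrow> if mem_ok M s' then run M B s' is else None)"

fun is_io :: "instr \<Rightarrow> bool" where
  "is_io (Read _ _) = True"
| "is_io (Write _ _) = True"
| "is_io _ = False"

definition io_cost :: "instr list \<Rightarrow> nat" where
  "io_cost prog = length (filter is_io prog)"

definition valid_layout :: "nat \<Rightarrow> (nat \<times> nat) set \<Rightarrow> (nat \<times> nat) set \<Rightarrow> (var \<Rightarrow> nat \<times> nat) \<Rightarrow> bool" where
  "valid_layout B A C pos \<longleftrightarrow> inj_on pos (input_vars A C) \<and> (\<forall>x\<in>input_vars A C. snd (pos x) < B)"

definition init_state :: "(nat \<times> nat) set \<Rightarrow> (nat \<times> nat) set \<Rightarrow> (var \<Rightarrow> nat \<times> nat) \<Rightarrow> state" where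
  "init_state A C pos =
     (\<lambda>_. None,
      \<lambda>b t. if \<exists>x\<in>input_vars A C. pos x = (b, t)
            then Some {# [THE x. x \<in> input_vars A C \<and> pos x = (b, t)] #} else None)"

definition computes_product ::
  "nat \<Rightarrow> nat \<Rightarrow> (nat \<times> nat) set \<Rightarrow> (nat \<times> nat) set \<Rightarrow> (var \<Rightarrow> nat \<times> nat) \<Rightarrow> instr list \<Rightarrow> bool" where
  "computes_product M B A C pos prog \<longleftrightarrow>
     (\<exists>m d. run M B (init_state A C pos) prog = Some (m, d) \<and>
        (\<forall>(i, k) \<in> prod_pattern A C. \<exists>b t. t < B \<and> d b t = Some (target A C i k)))"

end

theory Submission
  imports Defs
begin

definition wd :: "nat \<Rightarrow> nat \<Rightarrow> nat \<Rightarrow> var list" where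
  "wd i j k = [Inl (i, j), Inr (j, k)]"

lemma in_fmul: "w \<in># fmul u v \<longleftrightarrow> (\<exists>a\<in>#u. \<exists>b\<in>#v. w = a @ b)"
  unfolding fmul_def by auto

lemma in_target:
  assumes "finite A"
  shows "w \<in># target A C i k \<longleftrightarrow> (\<exists>j. (i,j)\<in>A \<and> (j,k)\<in>C \<and> w = wd i j k)"
proof -
  have fj: "finite {j. (i, j) \<in> A \<and> (j, k) \<in> C}"
    by (rule finite_subset[of _ "snd ` A"]) (force intro: assms)+
  show ?thesis unfolding target_def wd_def
    using set_mset_sum[OF fj, of "\<lambda>j. {#[Inl (i, j), Inr (j, k)]#}"] by auto
qed

lemma mul_lemma:
  assumes fin: "finite A" and nu: "[] \<notin># u" and nv: "[] \<notin># v"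
    and sub: "fmul u v \<subseteq># target A C i k" and w: "wd i j k \<in># fmul u v"
  shows "set_mset u = {[Inl (i,j)]} \<and> set_mset v = {[Inr (j,k)]}"
proof -
  have T: "\<And>x. x \<in># fmul u v \<Longrightarrow> \<exists>j'. x = wd i j' k"
    using sub fin by (meson in_target mset_subset_eqD)
  obtain a b where a: "a \<in># u" and b: "b \<in># v" and ab: "wd i j k = a @ b"
    using w in_fmul by metis
  have "a \<noteq> []" "b \<noteq> []" using a b nu nv by auto
  with ab have a1: "a = [Inl (i,j)]" and b1: "b = [Inr (j,k)]"
    unfolding wd_def by (cases a; cases b; auto simp: Cons_eq_append_conv)+
  have U: "a' = [Inl (i,j)]" if "a' \<in># u" for a'
  proof -
    have "a' @ b \<in># fmul u v" using that b in_fmul by blast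
    then obtain j' where "a' @ b = wd i j' k" using T by blast
    moreover have "a' \<noteq> []" using that nu by auto
    ultimately show ?thesis using b1 unfolding wd_def
      by (cases a') (auto simp: Cons_eq_append_conv)
  qed
  have V: "b' = [Inr (j,k)]" if "b' \<in># v" for b'
  proof -
    have "a @ b' \<in># fmul u v" using that a in_fmul by blast
    then obtain j' where "a @ b' = wd i j' k" using T by blast
    moreover have "b' \<noteq> []" using that nv by auto
    ultimately show ?thesis using a1 unfolding wd_def
      by (cases b') (auto simp: Cons_eq_append_conv)
  qed
  show ?thesis using U V a b a1 b1 by blast
qed

definition mvals :: "state \<Rightarrow> fsr set" where "mvals \<sigma> = {v. \<exists>a. fst \<sigma> a = Some v}"
definition dvals :: "state \<Rightarrow> fsr set" where "dvals \<sigma> = {v. \<exists>b t. snd \<sigma> b t = Some v}"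
definition wf_st :: "state \<Rightarrow> bool" where "wf_st \<sigma> \<longleftrightarrow> (\<forall>v \<in> mvals \<sigma> \<union> dvals \<sigma>. [] \<notin># v)"
definition Rs :: "(nat \<times> nat) set \<Rightarrow> (nat \<times> nat) set \<Rightarrow> state \<Rightarrow> (nat \<times> nat \<times> nat) set" where
  "Rs A C \<sigma> = {(i,j,k). \<exists>v \<in> mvals \<sigma> \<union> dvals \<sigma>. v \<subseteq># target A C i k \<and> wd i j k \<in># v}"
definition atoms :: "fsr set \<Rightarrow> var set" where "atoms S = {x. \<exists>v\<in>S. set_mset v = {[x]}}"
definition Inv :: "(nat \<times> nat) set \<Rightarrow> (nat \<times> nat) set \<Rightarrow> state \<Rightarrow> state \<Rightarrow> fsr set \<Rightarrow> bool" where
  "Inv A C \<sigma>0 \<sigma> S \<longleftrightarrow>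
  (\<forall>i j k. (i,j,k) \<in> Rs A C \<sigma> \<longrightarrow> (i,j,k) \<notin> Rs A C \<sigma>0 \<longrightarrow> Inl (i,j) \<in> atoms S \<and> Inr (j,k) \<in> atoms S) \<and>
  (\<forall>v x. v \<in> mvals \<sigma> \<longrightarrow> set_mset v = {[x]} \<longrightarrow> x \<in> atoms S) \<and>
  (\<forall>b t v. snd \<sigma> b t = Some v \<longrightarrow> snd \<sigma>0 b t = Some v \<or> v \<in> S)"

lemma atoms_mono: "S \<subseteq> S' \<Longrightarrow> atoms S \<subseteq> atoms S'"
  unfolding atoms_def by auto

lemma mvals_card: assumes "mem_ok M \<sigma>" shows "finite (mvals \<sigma>) \<and> card (mvals \<sigma>) \<le> M"
proof -
  have e: "mvals \<sigma> = (\<lambda>a. the (fst \<sigma> a)) ` {a. fst \<sigma> a \<noteq> None}"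
    unfolding mvals_def by force
  show ?thesis using assms unfolding mem_ok_def e
    using card_image_le le_trans by blast
qed

lemma Rs_mono: "mvals \<sigma>' \<union> dvals \<sigma>' \<subseteq> mvals \<sigma> \<union> dvals \<sigma> \<Longrightarrow> Rs A C \<sigma>' \<subseteq> Rs A C \<sigma>"
  unfolding Rs_def by blast

lemma Inv_sub:
  assumes "mvals \<sigma>' \<subseteq> mvals \<sigma>" "snd \<sigma>' = snd \<sigma>" "Inv A C \<sigma>0 \<sigma> S" "wf_st \<sigma>"
  shows "Inv A C \<sigma>0 \<sigma>' S \<and> wf_st \<sigma>'"
proof -
  have d: "dvals \<sigma>' = dvals \<sigma>" using assms(2) unfolding dvals_def by simp
  have "Rs A C \<sigma>' \<subseteq> Rs A C \<sigma>" using assms(1) d by (intro Rs_mono) auto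
  then show ?thesis using assms d unfolding Inv_def wf_st_def
    by (simp add: subset_iff) blast
qed

lemma step_lemma:
  assumes fin: "finite A"
    and ex: "exec_instr B \<sigma> ins = Some \<sigma>'" and ok: "mem_ok M \<sigma>'" and wf: "wf_st \<sigma>"
    and fS: "finite S" and inv: "Inv A C \<sigma>0 \<sigma> S"
  shows "\<exists>S'. S \<subseteq> S' \<and> finite S' \<and> card S' \<le> card S + (if is_io ins then min B M else 0)
           \<and> wf_st \<sigma>' \<and> Inv A C \<sigma>0 \<sigma>' S'"
proof -
  obtain m d where \<sigma>: "\<sigma> = (m, d)" by fastforce
  have mc: "finite (mvals \<sigma>') \<and> card (mvals \<sigma>') \<le> M" using mvals_card[OF ok] .
  show ?thesis
  proof (cases ins)
    case (Read b f)
    have inj: "inj_on f {..<B}" using ex \<sigma> Read by (auto split: if_splits)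
    define m' where "m' = (\<lambda>a. if a \<in> f ` {t. t < B \<and> d b t \<noteq> None}
                   then d b (the_inv_into {..<B} f a) else m a)"
    have s': "\<sigma>' = (m', d)" using ex \<sigma> Read inj unfolding m'_def by auto
    define RV where "RV = {v. \<exists>t<B. d b t = Some v}"
    have RVsub: "RV \<subseteq> (\<lambda>t. the (d b t)) ` {..<B}" unfolding RV_def by force
    have finRV: "finite RV" using RVsub finite_surj by blast
    have cB: "card RV \<le> B" using RVsub card_image_le[of "{..<B}"] card_mono
      by (metis card_lessThan finite_imageI finite_lessThan le_trans)
    have m'ft: "m' (f t) = d b t" if "t < B" "d b t \<noteq> None" for t
      using that inj unfolding m'_def
      by (auto simp: the_inv_into_f_f)
    have RVm: "RV \<subseteq> mvals \<sigma>'" unfolding RV_def mvals_def s' using m'ft by fastforce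
    have cM: "card RV \<le> M" using RVm mc card_mono le_trans by blast
    have mv: "mvals \<sigma>' \<subseteq> mvals \<sigma> \<union> RV"
    proof
      fix v assume "v \<in> mvals \<sigma>'"
      then obtain a where a: "m' a = Some v" unfolding mvals_def s' by auto
      show "v \<in> mvals \<sigma> \<union> RV"
      proof (cases "a \<in> f ` {t. t < B \<and> d b t \<noteq> None}")
        case True
        then obtain t where "t < B" "a = f t" "d b t \<noteq> None" by auto
        then show ?thesis using a m'ft unfolding RV_def by auto
      next
        case False
        then show ?thesis using a unfolding m'_def mvals_def \<sigma> by auto
      qed
    qed
    have RVd: "RV \<subseteq> dvals \<sigma>" unfolding RV_def dvals_def \<sigma> by auto
    have dv: "dvals \<sigma>' = dvals \<sigma>" unfolding dvals_def s' \<sigma> by simp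
    have Rsub: "Rs A C \<sigma>' \<subseteq> Rs A C \<sigma>" using mv RVd dv by (intro Rs_mono) auto
    have wf': "wf_st \<sigma>'" using wf mv RVd dv unfolding wf_st_def by blast
    have am: "atoms S \<subseteq> atoms (S \<union> RV)" by (rule atoms_mono) auto
    have inv': "Inv A C \<sigma>0 \<sigma>' (S \<union> RV)"
    proof -
      have p1: "\<forall>i j k. (i,j,k) \<in> Rs A C \<sigma>' \<longrightarrow> (i,j,k) \<notin> Rs A C \<sigma>0 \<longrightarrow>
                  Inl (i,j) \<in> atoms (S \<union> RV) \<and> Inr (j,k) \<in> atoms (S \<union> RV)"
        using inv Rsub am unfolding Inv_def by blast
      have p2: "\<forall>v x. v \<in> mvals \<sigma>' \<longrightarrow> set_mset v = {[x]} \<longrightarrow> x \<in> atoms (S \<union> RV)"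
      proof (intro allI impI)
        fix v x assume v: "v \<in> mvals \<sigma>'" and sv: "set_mset v = {[x]}"
        show "x \<in> atoms (S \<union> RV)"
        proof (cases "v \<in> RV")
          case True then show ?thesis using sv unfolding atoms_def by blast
        next
          case False then have "v \<in> mvals \<sigma>" using v mv by blast
          then show ?thesis using sv inv am unfolding Inv_def by blast
        qed
      qed
      have p3: "\<forall>b t v. snd \<sigma>' b t = Some v \<longrightarrow> snd \<sigma>0 b t = Some v \<or> v \<in> S \<union> RV"
        using inv unfolding Inv_def s' \<sigma> by (simp (no_asm_use)) blast
      show ?thesis unfolding Inv_def using p1 p2 p3 by blast
    qed
    have "card (S \<union> RV) \<le> card S + card RV" by (rule card_Un_le)
    then show ?thesis using inv' wf' fS finRV cB cM Read
      by (intro exI[of _ "S \<union> RV"]) auto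
  next
    case (Write b f)
    have s': "\<sigma>' = (m, d(b := (\<lambda>t. if t < B then m (f t) else None)))" using ex \<sigma> Write by auto
    define WV where "WV = {v. \<exists>t<B. m (f t) = Some v}"
    have WVsub: "WV \<subseteq> (\<lambda>t. the (m (f t))) ` {..<B}" unfolding WV_def by force
    have finWV: "finite WV" using WVsub finite_surj by blast
    have cB: "card WV \<le> B" using WVsub card_image_le[of "{..<B}"] card_mono
      by (metis card_lessThan finite_imageI finite_lessThan le_trans)
    have WVm: "WV \<subseteq> mvals \<sigma>'" unfolding WV_def mvals_def s' by fastforce
    have cM: "card WV \<le> M" using WVm mc card_mono le_trans by blast
    have mv: "mvals \<sigma>' = mvals \<sigma>" unfolding mvals_def s' \<sigma> by simp
    have dv: "dvals \<sigma>' \<subseteq> dvals \<sigma> \<union> WV" unfolding dvals_def s' \<sigma> WV_def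
      by (auto split: if_splits)
    have WVm2: "WV \<subseteq> mvals \<sigma>" using WVm mv by simp
    have Rsub: "Rs A C \<sigma>' \<subseteq> Rs A C \<sigma>" using mv dv WVm2 by (intro Rs_mono) auto
    have wf': "wf_st \<sigma>'" using wf mv dv WVm2 unfolding wf_st_def by blast
    have am: "atoms S \<subseteq> atoms (S \<union> WV)" by (rule atoms_mono) auto
    have inv': "Inv A C \<sigma>0 \<sigma>' (S \<union> WV)"
    proof -
      have p1: "\<forall>i j k. (i,j,k) \<in> Rs A C \<sigma>' \<longrightarrow> (i,j,k) \<notin> Rs A C \<sigma>0 \<longrightarrow>
                  Inl (i,j) \<in> atoms (S \<union> WV) \<and> Inr (j,k) \<in> atoms (S \<union> WV)"
        using inv Rsub am unfolding Inv_def by blast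
      have p2: "\<forall>v x. v \<in> mvals \<sigma>' \<longrightarrow> set_mset v = {[x]} \<longrightarrow> x \<in> atoms (S \<union> WV)"
        using inv am mv unfolding Inv_def by blast
      have p3: "\<forall>b' t v. snd \<sigma>' b' t = Some v \<longrightarrow> snd \<sigma>0 b' t = Some v \<or> v \<in> S \<union> WV"
      proof (intro allI impI)
        fix b' t v assume h: "snd \<sigma>' b' t = Some v"
        show "snd \<sigma>0 b' t = Some v \<or> v \<in> S \<union> WV"
        proof (cases "b' = b")
          case True then show ?thesis using h unfolding s' WV_def by (auto split: if_splits)
        next
          case False
          then have "d b' t = Some v" using h unfolding s' by simp
          then show ?thesis using inv unfolding Inv_def \<sigma> snd_conv by blast
        qed
      qed
      show ?thesis unfolding Inv_def using p1 p2 p3 by blast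
    qed
    have "card (S \<union> WV) \<le> card S + card WV" by (rule card_Un_le)
    then show ?thesis using inv' wf' fS finWV cB cM Write
      by (intro exI[of _ "S \<union> WV"]) auto
  next
    case (Add x y z)
    obtain u v where u: "m x = Some u" and v: "m y = Some v"
      using ex \<sigma> Add by (auto split: option.splits)
    have s': "\<sigma>' = (m(z := Some (u + v)), d)" using ex \<sigma> Add u v by (simp add: fadd_def)
    have um: "u \<in> mvals \<sigma>" "v \<in> mvals \<sigma>" using u v unfolding mvals_def \<sigma> by auto
    have mv: "mvals \<sigma>' \<subseteq> mvals \<sigma> \<union> {u + v}" unfolding mvals_def s' \<sigma> by auto
    have dv: "dvals \<sigma>' = dvals \<sigma>" unfolding dvals_def s' \<sigma> by simp
    have Rsub: "Rs A C \<sigma>' \<subseteq> Rs A C \<sigma>"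
    proof
      fix tr assume "tr \<in> Rs A C \<sigma>'"
      then obtain i j k w where tr: "tr = (i,j,k)" and w: "w \<in> mvals \<sigma>' \<union> dvals \<sigma>'"
        and ws: "w \<subseteq># target A C i k" and ww: "wd i j k \<in># w" unfolding Rs_def by auto
      show "tr \<in> Rs A C \<sigma>"
      proof (cases "w = u + v")
        case True
        have "u \<subseteq># target A C i k" "v \<subseteq># target A C i k"
          using ws True by (meson mset_subset_eq_add_left mset_subset_eq_add_right subset_mset.order_trans)+
        moreover have "wd i j k \<in># u \<or> wd i j k \<in># v" using ww True by auto
        ultimately show ?thesis using um tr unfolding Rs_def by blast
      next
        case False
        then show ?thesis using w ws ww mv dv tr unfolding Rs_def by blast
      qed
    qed
    have wf': "wf_st \<sigma>'" using wf mv dv um unfolding wf_st_def by auto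
    have inv': "Inv A C \<sigma>0 \<sigma>' S"
    proof -
      have p1: "\<forall>i j k. (i,j,k) \<in> Rs A C \<sigma>' \<longrightarrow> (i,j,k) \<notin> Rs A C \<sigma>0 \<longrightarrow>
                  Inl (i,j) \<in> atoms S \<and> Inr (j,k) \<in> atoms S"
        using inv Rsub unfolding Inv_def by blast
      have p2: "\<forall>w x. w \<in> mvals \<sigma>' \<longrightarrow> set_mset w = {[x]} \<longrightarrow> x \<in> atoms S"
      proof (intro allI impI)
        fix w x assume "w \<in> mvals \<sigma>'" "set_mset w = {[x]}"
        moreover have "set_mset (u + v) = {[x]} \<Longrightarrow> set_mset u = {[x]} \<or> set_mset v = {[x]}"
          by (auto simp: set_eq_iff)
        ultimately show "x \<in> atoms S" using mv inv um unfolding Inv_def by blast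
      qed
      have p3: "\<forall>b t w. snd \<sigma>' b t = Some w \<longrightarrow> snd \<sigma>0 b t = Some w \<or> w \<in> S"
        using inv unfolding Inv_def s' \<sigma> by auto
      show ?thesis unfolding Inv_def using p1 p2 p3 by blast
    qed
    show ?thesis using inv' wf' fS Add by (intro exI[of _ S]) auto
  next
    case (Mul x y z)
    obtain u v where u: "m x = Some u" and v: "m y = Some v"
      using ex \<sigma> Mul by (auto split: option.splits)
    have s': "\<sigma>' = (m(z := Some (fmul u v)), d)" using ex \<sigma> Mul u v by simp
    have um: "u \<in> mvals \<sigma>" "v \<in> mvals \<sigma>" using u v unfolding mvals_def \<sigma> by auto
    have nu: "[] \<notin># u" "[] \<notin># v" using um wf unfolding wf_st_def by auto
    have mv: "mvals \<sigma>' \<subseteq> mvals \<sigma> \<union> {fmul u v}" unfolding mvals_def s' \<sigma> by auto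
    have dv: "dvals \<sigma>' = dvals \<sigma>" unfolding dvals_def s' \<sigma> by simp
    have nf: "[] \<notin># fmul u v" using nu in_fmul by fastforce
    have wf': "wf_st \<sigma>'" using wf mv dv nf unfolding wf_st_def by auto
    have inv': "Inv A C \<sigma>0 \<sigma>' S"
    proof -
      have p1: "\<forall>i j k. (i,j,k) \<in> Rs A C \<sigma>' \<longrightarrow> (i,j,k) \<notin> Rs A C \<sigma>0 \<longrightarrow>
                  Inl (i,j) \<in> atoms S \<and> Inr (j,k) \<in> atoms S"
      proof (intro allI impI)
        fix i j k assume r: "(i,j,k) \<in> Rs A C \<sigma>'" and n0: "(i,j,k) \<notin> Rs A C \<sigma>0"
        then obtain w where w: "w \<in> mvals \<sigma>' \<union> dvals \<sigma>'"
          and ws: "w \<subseteq># target A C i k" and ww: "wd i j k \<in># w" unfolding Rs_def by auto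
        show "Inl (i,j) \<in> atoms S \<and> Inr (j,k) \<in> atoms S"
        proof (cases "w = fmul u v")
          case True
          then have "set_mset u = {[Inl (i,j)]} \<and> set_mset v = {[Inr (j,k)]}"
            using mul_lemma[OF fin nu ] ws ww by blast
          then show ?thesis using inv um unfolding Inv_def by blast
        next
          case False
          then have "(i,j,k) \<in> Rs A C \<sigma>" using w ws ww mv dv unfolding Rs_def by blast
          then show ?thesis using inv n0 unfolding Inv_def by blast
        qed
      qed
      have p2: "\<forall>w x. w \<in> mvals \<sigma>' \<longrightarrow> set_mset w = {[x]} \<longrightarrow> x \<in> atoms S"
      proof (intro allI impI)
        fix w x assume w: "w \<in> mvals \<sigma>'" and sx: "set_mset w = {[x]}"
        have "set_mset (fmul u v) \<noteq> {[x]}"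
        proof
          assume "set_mset (fmul u v) = {[x]}"
          then have "[x] \<in># fmul u v" by auto
          then obtain a c where "a \<in># u" "c \<in># v" "[x] = a @ c" using in_fmul by metis
          then show False using nu by (cases a; cases c) auto
        qed
        then show "x \<in> atoms S" using w sx mv inv unfolding Inv_def by blast
      qed
      have p3: "\<forall>b t w. snd \<sigma>' b t = Some w \<longrightarrow> snd \<sigma>0 b t = Some w \<or> w \<in> S"
        using inv unfolding Inv_def s' \<sigma> by auto
      show ?thesis unfolding Inv_def using p1 p2 p3 by blast
    qed
    show ?thesis using inv' wf' fS Mul by (intro exI[of _ S]) auto
  next
    case (Copy x z)
    obtain u where u: "m x = Some u" using ex \<sigma> Copy by (auto split: option.splits)
    have s': "\<sigma>' = (m(z := Some u), d)" using ex \<sigma> Copy u by simp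
    have "mvals \<sigma>' \<subseteq> mvals \<sigma>" using u unfolding mvals_def s' \<sigma> by auto
    moreover have "snd \<sigma>' = snd \<sigma>" using s' \<sigma> by simp
    ultimately show ?thesis using Inv_sub inv wf fS Copy by (intro exI[of _ S]) auto
  next
    case (Del x)
    have s': "\<sigma>' = (m(x := None), d)" using ex \<sigma> Del by simp
    have "mvals \<sigma>' \<subseteq> mvals \<sigma>" unfolding mvals_def s' \<sigma> by auto
    moreover have "snd \<sigma>' = snd \<sigma>" using s' \<sigma> by simp
    ultimately show ?thesis using Inv_sub inv wf fS Del by (intro exI[of _ S]) auto
  qed
qed

lemma lw:
  fixes SA SC SP :: "(nat \<times> nat) set" and X :: real
  assumes fA: "finite SA" and fC: "finite SC" and fP: "finite SP"
    and cA: "card SA \<le> X" and cC: "card SC \<le> X" and cP: "card SP \<le> X"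
  shows "real (card {(i,j,k). (i,j)\<in>SA \<and> (j,k)\<in>SC \<and> (i,k)\<in>SP}) \<le> 2 * X * sqrt X"
proof -
  define T where "T = {(i,j,k). (i,j)\<in>SA \<and> (j,k)\<in>SC \<and> (i,k)\<in>SP}"
  define h where "h = sqrt X"
  define F where "F j = {i. (i,j)\<in>SA}" for j
  have X0: "X \<ge> 0" using cA by linarith
  have h0: "h \<ge> 0" unfolding h_def using X0 by simp
  have hh: "h * h = X" unfolding h_def using X0 by simp
  have fF: "finite (F j)" for j
    by (rule finite_subset[of _ "fst ` SA"]) (auto simp: F_def intro: fA, metis fst_conv image_eqI)
  define H where "H = {j. h < card (F j)}"
  have Hsub: "H \<subseteq> snd ` SA"
  proof
    fix j assume "j \<in> H"
    then have "F j \<noteq> {}" unfolding H_def using h0 by auto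
    then show "j \<in> snd ` SA" unfolding F_def by force
  qed
  have fH: "finite H" using Hsub fA finite_subset by blast
  have fT: "finite T"
  proof (rule finite_subset[of _ "fst ` SA \<times> snd ` SA \<times> snd ` SC"])
    show "T \<subseteq> fst ` SA \<times> snd ` SA \<times> snd ` SC"
    proof
      fix x assume "x \<in> T"
      then obtain i j k where x: "x = (i,j,k)" "(i,j)\<in>SA" "(j,k)\<in>SC" unfolding T_def by auto
      have "i \<in> fst ` SA" "j \<in> snd ` SA" "k \<in> snd ` SC" using x by (metis fst_conv snd_conv image_eqI)+
      then show "x \<in> fst ` SA \<times> snd ` SA \<times> snd ` SC" using x by auto
    qed
  qed (use fA fC in auto)
  have sumF: "(\<Sum>j\<in>H. card (F j)) \<le> card SA"
  proof -
    have "(\<Sum>j\<in>H. card (F j)) = (\<Sum>j\<in>H. card ((\<lambda>i. (i,j)) ` F j))"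
      by (intro sum.cong refl) (simp add: card_image inj_on_def)
    also have "\<dots> = card (\<Union>j\<in>H. (\<lambda>i. (i,j)) ` F j)"
      by (rule card_UN_disjoint[symmetric]) (auto simp: fH fF)
    also have "\<dots> \<le> card SA"
      by (rule card_mono[OF fA]) (auto simp: F_def)
    finally show ?thesis .
  qed
  have Hh: "real (card H) * h \<le> X"
  proof -
    have "real (card H) * h = (\<Sum>j\<in>H. h)" by simp
    also have "\<dots> \<le> (\<Sum>j\<in>H. real (card (F j)))"
      by (rule sum_mono) (simp add: H_def less_imp_le)
    also have "\<dots> \<le> card SA" using sumF by (metis of_nat_le_iff of_nat_sum)
    finally show ?thesis using cA by linarith
  qed
  define T1 where "T1 = {(i,j,k)\<in>T. j \<in> H}"
  define T2 where "T2 = {(i,j,k)\<in>T. j \<notin> H}"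
  have TU: "T = T1 \<union> T2" unfolding T1_def T2_def by auto
  have T1s: "T1 \<subseteq> (\<lambda>((i,k),j). (i,j,k)) ` (SP \<times> H)"
  proof
    fix x assume "x \<in> T1"
    then obtain i j k where x: "x = (i,j,k)" "(i,k)\<in>SP" "j \<in> H" unfolding T1_def T_def by auto
    show "x \<in> (\<lambda>((i,k),j). (i,j,k)) ` (SP \<times> H)"
      by (rule image_eqI[of _ _ "((i,k),j)"]) (use x in auto)
  qed
  have c1: "card T1 \<le> card SP * card H"
  proof -
    have "card T1 \<le> card ((\<lambda>((i,k),j). (i,j,k)) ` (SP \<times> H))"
      by (rule card_mono[OF _ T1s]) (use fP fH in auto)
    also have "\<dots> \<le> card (SP \<times> H)" by (rule card_image_le) (use fP fH in auto)
    also have "\<dots> = card SP * card H" by (rule card_cartesian_product)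
    finally show ?thesis .
  qed
  have c1r: "real (card T1) \<le> X * h"
  proof -
    have "real (card T1) \<le> real (card SP) * real (card H)" using c1 by (metis of_nat_le_iff of_nat_mult)
    also have "\<dots> \<le> X * real (card H)" using cP by (intro mult_right_mono) auto
    also have "\<dots> \<le> X * h"
    proof (cases "X = 0")
      case True then show ?thesis by simp
    next
      case False
      then have "h > 0" using h0 hh by auto
      then have "real (card H) \<le> h" using Hh hh
        by (metis mult_le_cancel_right_pos)
      then show ?thesis using X0 by (intro mult_left_mono) auto
    qed
    finally show ?thesis .
  qed
  define G where "G p = (\<lambda>i. (i, fst p, snd p)) ` {i. (i, fst p) \<in> SA \<and> fst p \<notin> H}" for p :: "nat \<times> nat"
  have T2s: "T2 \<subseteq> (\<Union>p\<in>SC. G p)"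
  proof
    fix x assume "x \<in> T2"
    then obtain i j k where x: "x = (i,j,k)" "(i,j)\<in>SA" "(j,k)\<in>SC" "j \<notin> H"
      unfolding T2_def T_def by auto
    then have "x \<in> G (j,k)" unfolding G_def by auto
    then show "x \<in> (\<Union>p\<in>SC. G p)" using x by blast
  qed
  have "card T2 \<le> card (\<Union>p\<in>SC. G p)"
  proof (rule card_mono)
    show "finite (\<Union>p\<in>SC. G p)"
    proof (rule finite_UN_I[OF fC])
      fix p :: "nat \<times> nat"
      have "{i. (i, fst p) \<in> SA \<and> fst p \<notin> H} \<subseteq> F (fst p)" unfolding F_def by auto
      then show "finite (G p)" unfolding G_def using fF finite_subset by blast
    qed
  qed (rule T2s)
  also have "\<dots> \<le> (\<Sum>p\<in>SC. card (G p))" by (rule card_UN_le[OF fC])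
  finally have c2: "real (card T2) \<le> (\<Sum>p\<in>SC. real (card (G p)))"
    by (metis of_nat_le_iff of_nat_sum)
  have Gh: "real (card (G p)) \<le> h" for p
  proof (cases "fst p \<in> H")
    case True then show ?thesis using h0 by (simp add: G_def)
  next
    case False
    have "card (G p) \<le> card (F (fst p))" unfolding G_def F_def
      using False card_image_le fF[unfolded F_def] by auto
    then show ?thesis using False unfolding H_def by force
  qed
  have c2r: "real (card T2) \<le> X * h"
  proof -
    have "(\<Sum>p\<in>SC. real (card (G p))) \<le> (\<Sum>p\<in>SC. h)" by (rule sum_mono) (rule Gh)
    also have "\<dots> = real (card SC) * h" by simp
    also have "\<dots> \<le> X * h" using cC h0 by (intro mult_right_mono) auto
    finally show ?thesis using c2 by linarith
  qed
  have "card T \<le> card T1 + card T2" unfolding TU by (rule card_Un_le)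
  then have "real (card T) \<le> X * h + X * h" using c1r c2r by linarith
  then show ?thesis unfolding T_def h_def by simp
qed

lemma io_cost_Cons: "io_cost (i # xs) = (if is_io i then 1 else 0) + io_cost xs"
  by (simp add: io_cost_def)

lemma io_cost_append: "io_cost (p @ q) = io_cost p + io_cost q"
  by (simp add: io_cost_def)

lemma run_inv:
  assumes fin: "finite A"
  shows "run M B \<sigma> prog = Some \<sigma>1 \<Longrightarrow> wf_st \<sigma> \<Longrightarrow> finite S \<Longrightarrow> Inv A C \<sigma>0 \<sigma> S \<Longrightarrow>
   \<exists>S'. S \<subseteq> S' \<and> finite S' \<and> card S' \<le> card S + io_cost prog * min B M \<and> wf_st \<sigma>1 \<and> Inv A C \<sigma>0 \<sigma>1 S'"
proof (induction prog arbitrary: \<sigma> S)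
  case Nil then show ?case by (intro exI[of _ S]) (auto simp: io_cost_def)
next
  case (Cons ins prog)
  from Cons.prems(1) obtain \<sigma>' where ex: "exec_instr B \<sigma> ins = Some \<sigma>'" and ok: "mem_ok M \<sigma>'"
    and r: "run M B \<sigma>' prog = Some \<sigma>1" by (auto split: option.splits if_splits)
  obtain S1 where S1: "S \<subseteq> S1" "finite S1" "card S1 \<le> card S + (if is_io ins then min B M else 0)"
      "wf_st \<sigma>'" "Inv A C \<sigma>0 \<sigma>' S1"
    using step_lemma[OF fin ex ok Cons.prems(2,3,4)] by blast
  obtain S2 where S2: "S1 \<subseteq> S2" "finite S2" "card S2 \<le> card S1 + io_cost prog * min B M"
      "wf_st \<sigma>1" "Inv A C \<sigma>0 \<sigma>1 S2"
    using Cons.IH[OF r S1(4) S1(2) S1(5)] by blast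
  have "card S2 \<le> card S + io_cost (ins # prog) * min B M"
    using S1(3) S2(3) by (auto simp: io_cost_Cons algebra_simps split: if_splits)
  then show ?case using S1 S2 by (intro exI[of _ S2]) auto
qed

lemma run_mem: "run M B \<sigma> prog = Some \<sigma>1 \<Longrightarrow> finite (mvals \<sigma>) \<and> card (mvals \<sigma>) \<le> M \<Longrightarrow>
    finite (mvals \<sigma>1) \<and> card (mvals \<sigma>1) \<le> M"
proof (induction prog arbitrary: \<sigma>)
  case Nil then show ?case by simp
next
  case (Cons ins prog)
  from Cons.prems(1) obtain \<sigma>' where ok: "mem_ok M \<sigma>'"
    and r: "run M B \<sigma>' prog = Some \<sigma>1" by (auto split: option.splits if_splits)
  show ?case using Cons.IH[OF r mvals_card[OF ok]] .
qed

lemma run_append: "run M B \<sigma> (p1 @ p2) = Some \<sigma>2 \<Longrightarrow>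
    \<exists>\<sigma>1. run M B \<sigma> p1 = Some \<sigma>1 \<and> run M B \<sigma>1 p2 = Some \<sigma>2"
proof (induction p1 arbitrary: \<sigma>)
  case Nil then show ?case by simp
next
  case (Cons ins p)
  from Cons.prems obtain \<sigma>' where ex: "exec_instr B \<sigma> ins = Some \<sigma>'" and ok: "mem_ok M \<sigma>'"
    and r: "run M B \<sigma>' (p @ p2) = Some \<sigma>2" by (auto split: option.splits if_splits)
  obtain \<sigma>1 where "run M B \<sigma>' p = Some \<sigma>1" "run M B \<sigma>1 p2 = Some \<sigma>2" using Cons.IH[OF r] by blast
  then show ?case using ex ok by (intro exI[of _ \<sigma>1]) simp
qed

lemma io_split: "k \<le> io_cost prog \<Longrightarrow> \<exists>p1 p2. prog = p1 @ p2 \<and> io_cost p1 = k"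
proof (induction prog arbitrary: k)
  case Nil then show ?case by (auto simp: io_cost_def)
next
  case (Cons i xs)
  show ?case
  proof (cases "k = 0")
    case True then show ?thesis by (intro exI[of _ "[]"] exI[of _ "i # xs"]) (auto simp: io_cost_def)
  next
    case False
    show ?thesis
    proof (cases "is_io i")
      case True
      then have "k - 1 \<le> io_cost xs" using Cons.prems by (simp add: io_cost_Cons)
      then obtain p1 p2 where "xs = p1 @ p2" "io_cost p1 = k - 1" using Cons.IH by blast
      then show ?thesis using True False
        by (intro exI[of _ "i # p1"] exI[of _ p2]) (auto simp: io_cost_Cons)
    next
      case f2: False
      then have "k \<le> io_cost xs" using Cons.prems by (simp add: io_cost_Cons)
      then obtain p1 p2 where "xs = p1 @ p2" "io_cost p1 = k" using Cons.IH by blast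
      then show ?thesis using f2
        by (intro exI[of _ "i # p1"] exI[of _ p2]) (auto simp: io_cost_Cons)
    qed
  qed
qed

definition keyP :: "fsr \<Rightarrow> nat \<times> nat" where
  "keyP v = (let w = (SOME w. w \<in># v) in (fst (projl (w ! 0)), snd (projr (w ! 1))))"

lemma keyP_eq:
  assumes "finite A" "v \<subseteq># target A C i k" "wd i j k \<in># v"
  shows "keyP v = (i, k)"
proof -
  have "(SOME w. w \<in># v) \<in># v" using assms(3) by (rule someI)
  then have "(SOME w. w \<in># v) \<in># target A C i k" by (rule mset_subset_eqD[OF assms(2)])
  then obtain j' where "(SOME w. w \<in># v) = wd i j' k" using in_target[OF assms(1)] by blast
  then show ?thesis unfolding keyP_def wd_def Let_def by simp
qed

definition akey :: "fsr \<Rightarrow> var" where "akey v = hd (SOME w. w \<in># v)"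

lemma atoms_sub: "atoms S \<subseteq> akey ` S"
proof
  fix x assume "x \<in> atoms S"
  then obtain v where v: "v \<in> S" "set_mset v = {[x]}" unfolding atoms_def by auto
  have sv: "[x] \<in># v" using v(2) by (metis insertI1)
  have "(SOME w. w \<in># v) \<in># v" by (rule someI[of _ "[x]"]) (rule sv)
  then have "(SOME w. w \<in># v) = [x]" using v(2) by (metis singletonD)
  then have "akey v = x" unfolding akey_def by simp
  then show "x \<in> akey ` S" using v by blast
qed

lemma atoms_card: "finite S \<Longrightarrow> finite (atoms S) \<and> card (atoms S) \<le> card S"
  using atoms_sub by (meson card_image_le card_mono finite_imageI finite_subset le_trans)

lemma side_sets:
  assumes "finite S"
  shows "finite {p. Inl p \<in> atoms S} \<and> card {p. Inl p \<in> atoms S} \<le> card S \<and>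
         finite {p. Inr p \<in> atoms S} \<and> card {p. Inr p \<in> atoms S} \<le> card S"
proof -
  have a: "finite (atoms S)" "card (atoms S) \<le> card S" using atoms_card[OF assms] by auto
  have l: "{p. Inl p \<in> atoms S} \<subseteq> projl ` atoms S" by force
  have r: "{p. Inr p \<in> atoms S} \<subseteq> projr ` atoms S" by force
  show ?thesis using a l r
    by (meson card_image_le card_mono finite_imageI finite_subset le_trans)
qed

lemma seg:
  assumes fin: "finite A" and r: "run M B \<sigma> prog = Some \<sigma>1" and wf: "wf_st \<sigma>"
    and mb: "finite (mvals \<sigma>)"
  shows "\<exists>S. finite S \<and> card S \<le> card (mvals \<sigma>) + io_cost prog * min B M \<and> wf_st \<sigma>1 \<and>
     (\<forall>i j k. (i,j,k) \<in> Rs A C \<sigma>1 \<longrightarrow> (i,j,k) \<notin> Rs A C \<sigma> \<longrightarrow> Inl (i,j) \<in> atoms S \<and> Inr (j,k) \<in> atoms S) \<and>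
     (\<forall>b t v. snd \<sigma>1 b t = Some v \<longrightarrow> snd \<sigma> b t = Some v \<or> v \<in> S)"
proof -
  have "Inv A C \<sigma> \<sigma> (mvals \<sigma>)" unfolding Inv_def atoms_def by blast
  from run_inv[OF fin r wf mb this] obtain S' where
    "finite S'" "card S' \<le> card (mvals \<sigma>) + io_cost prog * min B M" "wf_st \<sigma>1" "Inv A C \<sigma> \<sigma>1 S'"
    by blast
  then show ?thesis unfolding Inv_def by (intro exI[of _ S']) blast
qed

definition trip :: "(nat \<times> nat) set \<Rightarrow> (nat \<times> nat) set \<Rightarrow> (nat \<times> nat) set \<Rightarrow> (nat \<times> nat \<times> nat) set" where
  "trip SA SC SP = {(i,j,k). (i,j)\<in>SA \<and> (j,k)\<in>SC \<and> (i,k)\<in>SP}"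

lemma trip_fin: "finite SA \<Longrightarrow> finite SC \<Longrightarrow> finite (trip SA SC SP)"
proof -
  assume a: "finite SA" "finite SC"
  have "trip SA SC SP \<subseteq> fst ` SA \<times> SC"
  proof
    fix x assume "x \<in> trip SA SC SP"
    then obtain i j k where x: "x = (i,j,k)" "(i,j)\<in>SA" "(j,k)\<in>SC" unfolding trip_def by auto
    have "i \<in> fst ` SA" using x(2) by (metis fst_conv image_eqI)
    then show "x \<in> fst ` SA \<times> SC" using x by auto
  qed
  then show ?thesis using a finite_subset by blast
qed

lemma Rs_sub: assumes fA: "finite A" shows "Rs A C \<sigma> \<subseteq> trip A C UNIV"
proof
  fix x assume "x \<in> Rs A C \<sigma>"
  then obtain i j k v where x: "x = (i,j,k)" "v \<subseteq># target A C i k" "wd i j k \<in># v"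
    unfolding Rs_def by auto
  have w: "wd i j k \<in># target A C i k" using x(2,3) by (rule mset_subset_eqD)
  obtain j' where j': "(i,j')\<in>A" "(j',k)\<in>C" "wd i j k = wd i j' k"
    using in_target[OF fA, THEN iffD1, OF w] by blast
  have "j' = j" using j'(3) unfolding wd_def by simp
  then show "x \<in> trip A C UNIV" using x(1) j' unfolding trip_def by simp
qed

lemma Rs_fin: "finite A \<Longrightarrow> finite C \<Longrightarrow> finite (Rs A C \<sigma>)"
  by (rule finite_subset[OF Rs_sub trip_fin])

lemma g_mono: assumes "(a::real) \<le> b" "0 \<le> a" shows "2 * a * sqrt a \<le> 2 * b * sqrt b"
proof -
  have "a * sqrt a \<le> b * sqrt b"
    by (rule mult_mono) (use assms in \<open>auto intro: real_sqrt_le_mono\<close>)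
  then show ?thesis by linarith
qed

lemma seg_card:
  assumes fA: "finite A" and fC: "finite C" and r: "run M B \<sigma> prog = Some \<sigma>1" and wf: "wf_st \<sigma>"
    and mb: "finite (mvals \<sigma>)" "card (mvals \<sigma>) \<le> M"
  shows "real (card (Rs A C \<sigma>1 - Rs A C \<sigma>)) \<le>
    2 * real (2*M + io_cost prog * min B M) * sqrt (real (2*M + io_cost prog * min B M))"
proof -
  obtain S where fS: "finite S" and cS: "card S \<le> card (mvals \<sigma>) + io_cost prog * min B M"
    and P1: "\<forall>i j k. (i,j,k) \<in> Rs A C \<sigma>1 \<longrightarrow> (i,j,k) \<notin> Rs A C \<sigma> \<longrightarrow> Inl (i,j) \<in> atoms S \<and> Inr (j,k) \<in> atoms S"
    and P2: "\<forall>b t v. snd \<sigma>1 b t = Some v \<longrightarrow> snd \<sigma> b t = Some v \<or> v \<in> S"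
    using seg[OF fA r wf mb(1), of C] by blast
  have m1: "finite (mvals \<sigma>1)" "card (mvals \<sigma>1) \<le> M" using run_mem[OF r] mb by auto
  define X where "X = 2*M + io_cost prog * min B M"
  define SA where "SA = {p. Inl p \<in> atoms S}"
  define SC where "SC = {p. Inr p \<in> atoms S}"
  define SP where "SP = keyP ` (mvals \<sigma>1 \<union> S)"
  have sA: "finite SA" "card SA \<le> X" and sC: "finite SC" "card SC \<le> X"
    using side_sets[OF fS] cS mb(2) unfolding SA_def SC_def X_def by auto
  have fP: "finite SP" unfolding SP_def using m1 fS by auto
  have "card SP \<le> card (mvals \<sigma>1 \<union> S)" unfolding SP_def by (rule card_image_le) (use m1 fS in auto)
  also have "\<dots> \<le> card (mvals \<sigma>1) + card S" by (rule card_Un_le)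
  finally have cP: "card SP \<le> X" using m1 cS mb unfolding X_def by linarith
  have sub: "Rs A C \<sigma>1 - Rs A C \<sigma> \<subseteq> trip SA SC SP"
  proof
    fix x assume x: "x \<in> Rs A C \<sigma>1 - Rs A C \<sigma>"
    then have "x \<in> Rs A C \<sigma>1" by simp
    then obtain i j k v where ijk: "x = (i,j,k)" and v: "v \<in> mvals \<sigma>1 \<union> dvals \<sigma>1"
      "v \<subseteq># target A C i k" "wd i j k \<in># v" unfolding Rs_def by auto
    have n: "(i,j,k) \<notin> Rs A C \<sigma>" using x ijk by auto
    have "v \<in> mvals \<sigma>1 \<union> S"
    proof (cases "v \<in> mvals \<sigma>1")
      case False
      then obtain b t where "snd \<sigma>1 b t = Some v" using v(1) unfolding dvals_def by auto
      then have "snd \<sigma> b t = Some v \<or> v \<in> S" using P2 by blast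
      moreover have "snd \<sigma> b t \<noteq> Some v"
      proof
        assume "snd \<sigma> b t = Some v"
        then have "v \<in> dvals \<sigma>" unfolding dvals_def by auto
        then have "(i,j,k) \<in> Rs A C \<sigma>" using v unfolding Rs_def by auto
        then show False using n by simp
      qed
      ultimately show ?thesis by auto
    qed auto
    then have "(i,k) \<in> SP" unfolding SP_def using keyP_eq[OF fA v(2,3)] by (metis image_eqI)
    moreover have "(i,j) \<in> SA" "(j,k) \<in> SC" using P1 x ijk unfolding SA_def SC_def by auto
    ultimately show "x \<in> trip SA SC SP" unfolding trip_def ijk by auto
  qed
  have "card (Rs A C \<sigma>1 - Rs A C \<sigma>) \<le> card (trip SA SC SP)"
    by (rule card_mono[OF trip_fin[OF sA(1) sC(1)] sub])
  also have "real (card (trip SA SC SP)) \<le> 2 * real X * sqrt (real X)"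
    unfolding trip_def by (rule lw) (use sA sC fP cP in auto)
  finally show ?thesis unfolding X_def by simp
qed

lemma multi:
  assumes fA: "finite A" and fC: "finite C" and k1: "1 \<le> k"
  shows "run M B \<sigma> prog = Some \<sigma>1 \<Longrightarrow> wf_st \<sigma> \<Longrightarrow> finite (mvals \<sigma>) \<Longrightarrow> card (mvals \<sigma>) \<le> M \<Longrightarrow>
    real (card (Rs A C \<sigma>1 - Rs A C \<sigma>)) \<le>
      (real (io_cost prog div k) + 1) * (2 * real (2*M + k * min B M) * sqrt (real (2*M + k * min B M)))"
proof (induction "io_cost prog" arbitrary: prog \<sigma> rule: less_induct)
  case less
  define G where "G = 2 * real (2*M + k * min B M) * sqrt (real (2*M + k * min B M))"
  have G0: "0 \<le> G" unfolding G_def by simp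
  have segk: "real (card (Rs A C \<sigma>1' - Rs A C \<sigma>')) \<le> G"
    if r: "run M B \<sigma>' p = Some \<sigma>1'" and w: "wf_st \<sigma>'" and f: "finite (mvals \<sigma>')"
      and c: "card (mvals \<sigma>') \<le> M" and pk: "io_cost p \<le> k" for \<sigma>' p \<sigma>1'
  proof -
    have "real (card (Rs A C \<sigma>1' - Rs A C \<sigma>')) \<le>
        2 * real (2*M + io_cost p * min B M) * sqrt (real (2*M + io_cost p * min B M))"
      by (rule seg_card[OF fA fC r w f c])
    also have "\<dots> \<le> G" unfolding G_def
    proof (rule g_mono)
      have "io_cost p * min B M \<le> k * min B M" using pk by (rule mult_le_mono1)
      then have "2*M + io_cost p * min B M \<le> 2*M + k * min B M" by (rule add_left_mono)
      then show "real (2*M + io_cost p * min B M) \<le> real (2*M + k * min B M)" by (rule of_nat_mono)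
    qed simp
    finally show ?thesis .
  qed
  show ?case
  proof (cases "io_cost prog \<le> k")
    case True
    have "real (card (Rs A C \<sigma>1 - Rs A C \<sigma>)) \<le> G" by (rule segk[OF less.prems True])
    also have "\<dots> \<le> (real (io_cost prog div k) + 1) * G" using G0 by (simp add: algebra_simps)
    finally show ?thesis unfolding G_def .
  next
    case False
    obtain p1 p2 where sp: "prog = p1 @ p2" "io_cost p1 = k" using io_split[of k prog] False by auto
    obtain \<sigma>m where r1: "run M B \<sigma> p1 = Some \<sigma>m" and r2: "run M B \<sigma>m p2 = Some \<sigma>1"
      using run_append less.prems(1) sp(1) by blast
    have wfm: "wf_st \<sigma>m" using seg[OF fA r1 less.prems(2,3), of C] by blast
    have mm: "finite (mvals \<sigma>m)" "card (mvals \<sigma>m) \<le> M" using run_mem[OF r1] less.prems(3,4) by auto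
    have io2: "io_cost prog = k + io_cost p2" using sp io_cost_append by simp
    then have io3: "io_cost p2 < io_cost prog" using k1 by simp
    have h2: "real (card (Rs A C \<sigma>1 - Rs A C \<sigma>m)) \<le> (real (io_cost p2 div k) + 1) * G"
      using less.hyps[OF io3 r2 wfm mm] unfolding G_def .
    have h1: "real (card (Rs A C \<sigma>m - Rs A C \<sigma>)) \<le> G"
      by (rule segk[OF r1 less.prems(2,3,4)]) (simp add: sp)
    have "Rs A C \<sigma>1 - Rs A C \<sigma> \<subseteq> (Rs A C \<sigma>1 - Rs A C \<sigma>m) \<union> (Rs A C \<sigma>m - Rs A C \<sigma>)" by auto
    then have "card (Rs A C \<sigma>1 - Rs A C \<sigma>) \<le> card ((Rs A C \<sigma>1 - Rs A C \<sigma>m) \<union> (Rs A C \<sigma>m - Rs A C \<sigma>))"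
      by (intro card_mono) (use Rs_fin[OF fA fC] in auto)
    also have "\<dots> \<le> card (Rs A C \<sigma>1 - Rs A C \<sigma>m) + card (Rs A C \<sigma>m - Rs A C \<sigma>)" by (rule card_Un_le)
    finally have "real (card (Rs A C \<sigma>1 - Rs A C \<sigma>)) \<le>
        real (card (Rs A C \<sigma>1 - Rs A C \<sigma>m)) + real (card (Rs A C \<sigma>m - Rs A C \<sigma>))"
      by linarith
    also have "\<dots> \<le> (real (io_cost p2 div k) + 1) * G + G" using h1 h2 by linarith
    also have "\<dots> = (real (io_cost prog div k) + 1) * G"
    proof -
      have "io_cost prog div k = io_cost p2 div k + 1" using io2 k1 by simp
      then show ?thesis by (simp add: algebra_simps)
    qed
    finally show ?thesis unfolding G_def .
  qed
qed

lemma init_mvals: "mvals (init_state A C pos) = {}"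
  unfolding mvals_def init_state_def by simp

lemma init_dvals: "v \<in> dvals (init_state A C pos) \<Longrightarrow> \<exists>x. v = {#[x]#}"
  unfolding dvals_def init_state_def by (auto split: if_splits)

lemma init_wf: "wf_st (init_state A C pos)"
  unfolding wf_st_def using init_mvals init_dvals by fastforce

lemma wd_single: "\<not> wd i j k \<in># {#[x]#}"
  unfolding wd_def by simp

lemma init_Rs: "Rs A C (init_state A C pos) = {}"
proof -
  have "\<not> (wd i j k \<in># v)" if "v \<in> mvals (init_state A C pos) \<union> dvals (init_state A C pos)" for v i j k
    using that init_mvals init_dvals wd_single by blast
  then show ?thesis unfolding Rs_def by blast
qed

lemma all_trip:
  assumes fA: "finite A" and out: "\<forall>(i, k) \<in> prod_pattern A C. \<exists>b t. t < B \<and> d b t = Some (target A C i k)"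
    and tr: "(i,j,k) \<in> trip A C UNIV"
  shows "\<exists>b t. d b t = Some (target A C i k) \<and> wd i j k \<in># target A C i k"
proof -
  have a: "(i,j)\<in>A" "(j,k)\<in>C" using tr unfolding trip_def by auto
  then have "(i,k) \<in> prod_pattern A C" unfolding prod_pattern_def by auto
  then obtain b t where "d b t = Some (target A C i k)" using out by blast
  moreover have "wd i j k \<in># target A C i k" using in_target[OF fA] a by blast
  ultimately show ?thesis by blast
qed

lemma case2:
  assumes fA: "finite A" and fC: "finite C"
    and r: "run M B (init_state A C pos) prog = Some (m, d)"
    and out: "\<forall>(i, k) \<in> prod_pattern A C. \<exists>b t. t < B \<and> d b t = Some (target A C i k)"
  shows "real (card (trip A C UNIV)) \<le>
     2 * real (io_cost prog * min B M) * sqrt (real (io_cost prog * min B M))"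
proof -
  have fm: "finite (mvals (init_state A C pos))" using init_mvals by simp
  obtain S where fS: "finite S" and cS: "card S \<le> card (mvals (init_state A C pos)) + io_cost prog * min B M"
    and P1: "\<forall>i j k. (i,j,k) \<in> Rs A C (m,d) \<longrightarrow> (i,j,k) \<notin> Rs A C (init_state A C pos) \<longrightarrow>
               Inl (i,j) \<in> atoms S \<and> Inr (j,k) \<in> atoms S"
    and P2: "\<forall>b t v. snd (m,d) b t = Some v \<longrightarrow> snd (init_state A C pos) b t = Some v \<or> v \<in> S"
    using seg[OF fA r init_wf fm, of C] by blast
  define X where "X = io_cost prog * min B M"
  have cS': "card S \<le> X" using cS init_mvals unfolding X_def by simp
  define SA where "SA = {p. Inl p \<in> atoms S}"
  define SC where "SC = {p. Inr p \<in> atoms S}"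
  define SP where "SP = keyP ` S"
  have sA: "finite SA" "card SA \<le> X" and sC: "finite SC" "card SC \<le> X"
    using side_sets[OF fS] cS' unfolding SA_def SC_def by auto
  have fP: "finite SP" unfolding SP_def using fS by auto
  have cP: "card SP \<le> X" unfolding SP_def using card_image_le[OF fS, of keyP] cS' by linarith
  have sub: "trip A C UNIV \<subseteq> trip SA SC SP"
  proof
    fix x assume x: "x \<in> trip A C UNIV"
    obtain i j k where ijk: "x = (i,j,k)" by (cases x) auto
    obtain b t where bt: "d b t = Some (target A C i k)" and w: "wd i j k \<in># target A C i k"
      using all_trip[OF fA out] x ijk by blast
    have "target A C i k \<in> dvals (m,d)" unfolding dvals_def using bt by auto
    then have inR: "(i,j,k) \<in> Rs A C (m,d)" unfolding Rs_def using w by blast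
    have at: "Inl (i,j) \<in> atoms S \<and> Inr (j,k) \<in> atoms S" using P1 inR init_Rs by blast
    have "snd (init_state A C pos) b t \<noteq> Some (target A C i k)"
    proof
      assume "snd (init_state A C pos) b t = Some (target A C i k)"
      then have "target A C i k \<in> dvals (init_state A C pos)" unfolding dvals_def by blast
      then obtain y where "target A C i k = {#[y]#}" using init_dvals by blast
      then show False using w wd_single by metis
    qed
    then have "target A C i k \<in> S" using P2 bt by auto
    moreover have "keyP (target A C i k) = (i,k)" by (rule keyP_eq[OF fA subset_mset.order_refl w])
    ultimately have "(i,k) \<in> SP" unfolding SP_def by (metis image_eqI)
    then show "x \<in> trip SA SC SP" using at ijk unfolding trip_def SA_def SC_def by auto
  qed
  have "card (trip A C UNIV) \<le> card (trip SA SC SP)"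
    by (rule card_mono[OF trip_fin[OF sA(1) sC(1)] sub])
  also have "real (card (trip SA SC SP)) \<le> 2 * real X * sqrt (real X)"
    unfolding trip_def by (rule lw) (use sA sC fP cP in auto)
  finally show ?thesis unfolding X_def by simp
qed

lemma sqrt3: "sqrt 3 \<le> (7/4::real)"
  by (rule real_le_lsqrt) (auto simp: power2_eq_square)

lemma main_bound:
  assumes fA: "finite A" and fC: "finite C" and M0: "0 < M" and B0: "0 < B"
    and comp: "computes_product M B A C pos prog"
  shows "real (card (trip A C UNIV)) \<le> 42 * real (io_cost prog) * real B * sqrt (real M)"
proof -
  obtain m d where r: "run M B (init_state A C pos) prog = Some (m, d)"
    and out: "\<forall>(i, k) \<in> prod_pattern A C. \<exists>b t. t < B \<and> d b t = Some (target A C i k)"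
    using comp unfolding computes_product_def by blast
  define k where "k = max 1 (M div B)"
  have k1: "1 \<le> k" unfolding k_def by simp
  have kmin: "k * min B M \<le> M"
  proof (cases "B \<le> M")
    case True
    then have "1 \<le> M div B" using B0 by (simp add: div_greater_zero_iff Suc_le_eq)
    then have "k = M div B" unfolding k_def by simp
    moreover have "M div B * B \<le> M" by (metis div_mult_mod_eq le_add1)
    ultimately show ?thesis using True by simp
  next
    case False
    then have "M div B = 0" by simp
    then have "k = 1" unfolding k_def by simp
    then show ?thesis using False by simp
  qed
  have Mk: "M \<le> 2 * B * k"
  proof (cases "B \<le> M")
    case True
    then have q1: "1 \<le> M div B" using B0 by (simp add: div_greater_zero_iff Suc_le_eq)
    then have kq: "k = M div B" unfolding k_def by simp
    have e1: "M = M div B * B + M mod B" by simp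
    have e2: "M mod B < B" using B0 by simp
    have e3: "B \<le> M div B * B" using q1 by simp
    have "M \<le> 2 * (M div B * B)" using e1 e2 e3 by linarith
    then show ?thesis unfolding kq by (simp add: algebra_simps)
  next
    case False
    then have "M div B = 0" by simp
    then have "k = 1" unfolding k_def by simp
    then show ?thesis using False by simp
  qed
  define w where "w = real (card (trip A C UNIV))"
  define ii where "ii = real (io_cost prog)"
  define bb where "bb = real B"
  define mm where "mm = real M"
  define sm where "sm = sqrt mm"
  define kk where "kk = real k"
  have pos: "0 \<le> ii" "0 < bb" "0 < mm" "0 \<le> sm" "1 \<le> kk"
    using B0 M0 k1 unfolding ii_def bb_def mm_def sm_def kk_def by auto
  have allR: "trip A C UNIV \<subseteq> Rs A C (m,d) - Rs A C (init_state A C pos)"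
  proof
    fix x assume x: "x \<in> trip A C UNIV"
    obtain i j k where ijk: "x = (i,j,k)" by (cases x) auto
    obtain b t where bt: "d b t = Some (target A C i k)" and w: "wd i j k \<in># target A C i k"
      using all_trip[OF fA out] x ijk by blast
    have "target A C i k \<in> dvals (m,d)" unfolding dvals_def using bt by auto
    then have "(i,j,k) \<in> Rs A C (m,d)" unfolding Rs_def using w by blast
    then show "x \<in> Rs A C (m,d) - Rs A C (init_state A C pos)"
      unfolding ijk init_Rs by simp
  qed
  have wR: "w \<le> real (card (Rs A C (m,d) - Rs A C (init_state A C pos)))"
    unfolding w_def by (simp add: card_mono[OF _ allR] Rs_fin[OF fA fC])
  show ?thesis
  proof (cases "io_cost prog < k")
    case True
    define X where "X = io_cost prog * min B M"
    have "w \<le> 2 * real X * sqrt (real X)" unfolding w_def X_def by (rule case2[OF fA fC r out])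
    have XM: "X \<le> M"
    proof -
      have "X \<le> k * min B M" unfolding X_def using True by (intro mult_le_mono1) simp
      then show ?thesis using kmin by linarith
    qed
    have "X \<le> io_cost prog * B" unfolding X_def by (intro mult_le_mono2) simp
    then have "real X \<le> real (io_cost prog * B)" by (rule of_nat_mono)
    then have XB: "real X \<le> ii * bb" unfolding ii_def bb_def by simp
    have "sqrt (real X) \<le> sm" unfolding sm_def mm_def using XM by simp
    then have "2 * real X * sqrt (real X) \<le> 2 * real X * sm" by (intro mult_left_mono) auto
    also have "\<dots> \<le> 2 * (ii * bb) * sm" using XB pos by (intro mult_right_mono) auto
    also have "\<dots> \<le> 42 * ii * bb * sm" using pos by (simp add: mult_nonneg_nonneg)
    finally show ?thesis
      using \<open>w \<le> 2 * real X * sqrt (real X)\<close> unfolding w_def ii_def bb_def sm_def mm_def by linarith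
  next
    case False
    define X where "X = 2*M + k * min B M"
    define G where "G = 2 * real X * sqrt (real X)"
    define dd where "dd = real (io_cost prog div k)"
    have hw: "w \<le> (dd + 1) * G"
      using wR multi[OF fA fC k1 r init_wf] init_mvals unfolding dd_def G_def X_def
      by simp
    have G0: "0 \<le> G" unfolding G_def by simp
    have "X \<le> 3 * M" unfolding X_def using kmin by simp
    then have "real X \<le> real (3 * M)" by (rule of_nat_mono)
    then have X3: "real X \<le> 3 * mm" unfolding mm_def by simp
    have "G \<le> 2 * (3 * mm) * sqrt (3 * mm)" unfolding G_def by (rule g_mono[OF X3]) simp
    also have "\<dots> = 6 * mm * (sqrt 3 * sm)" unfolding sm_def by (simp add: real_sqrt_mult)
    also have "\<dots> \<le> 6 * mm * (7/4 * sm)" using pos sqrt3 by (intro mult_left_mono mult_right_mono) auto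
    finally have GB: "G \<le> 21/2 * mm * sm" by simp
    have dk: "dd * kk \<le> ii"
    proof -
      have "io_cost prog div k * k \<le> io_cost prog" by (metis div_mult_mod_eq le_add1)
      then have "real (io_cost prog div k * k) \<le> real (io_cost prog)" by (rule of_nat_mono)
      then show ?thesis unfolding dd_def kk_def ii_def by simp
    qed
    have ki: "kk \<le> ii" using False unfolding kk_def ii_def by simp
    have e1: "w * kk \<le> ((dd + 1) * G) * kk" using hw pos by (intro mult_right_mono) auto
    have e3: "G * ((dd + 1) * kk) \<le> G * (2 * ii)" using dk ki G0 by (intro mult_left_mono) (auto simp: algebra_simps)
    have e4: "G * (2 * ii) \<le> (21/2 * mm * sm) * (2 * ii)" using GB pos by (intro mult_right_mono) auto
    have "real M \<le> real (2 * B * k)" using Mk by (rule of_nat_mono)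
    then have Mkr: "mm \<le> 2 * bb * kk" unfolding mm_def bb_def kk_def by simp
    have e6: "21 * ii * sm * mm \<le> 21 * ii * sm * (2 * bb * kk)" using Mkr pos by (intro mult_left_mono) auto
    have "w * kk \<le> (42 * ii * bb * sm) * kk"
    proof -
      have "w * kk \<le> G * ((dd + 1) * kk)" using e1 by (simp add: algebra_simps)
      also have "\<dots> \<le> (21/2 * mm * sm) * (2 * ii)" using e3 e4 by linarith
      also have "\<dots> = 21 * ii * sm * mm" by (simp add: algebra_simps)
      also have "\<dots> \<le> 21 * ii * sm * (2 * bb * kk)" by (rule e6)
      also have "\<dots> = (42 * ii * bb * sm) * kk" by (simp add: algebra_simps)
      finally show ?thesis .
    qed
    then have "w \<le> 42 * ii * bb * sm" using pos by (simp add: mult_le_cancel_right_pos)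
    then show ?thesis unfolding w_def ii_def bb_def sm_def mm_def .
  qed
qed

theorem theorem2:
  shows "\<exists>c>0. \<forall>(N::nat) (Z::nat) (M::nat) (B::nat).
           0 < N \<longrightarrow> Z < N^2 \<longrightarrow> 0 < M \<longrightarrow> 0 < B \<longrightarrow>
           (\<exists>A C. A \<subseteq> {..<N} \<times> {..<N} \<and> C \<subseteq> {..<N} \<times> {..<N} \<and>
                  card A \<le> N \<and> card C \<le> N \<and> card (prod_pattern A C) \<le> Z \<and>
                  (\<forall>pos prog. valid_layout B A C pos \<longrightarrow> computes_product M B A C pos prog \<longrightarrow>
                     c * min (real N ^ 2 / (real M * real B))
                             (real N * sqrt (real Z) / (sqrt (real M) * real B))
                       \<le> real (io_cost prog)))"
proof (intro exI[of _ "1/200::real"] conjI allI impI)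
  show "(0::real) < 1/200" by simp
  fix N Z M B :: nat
  assume N0: "0 < N" and ZN: "Z < N^2" and M0: "0 < M" and B0: "0 < B"
  show "\<exists>A C. A \<subseteq> {..<N} \<times> {..<N} \<and> C \<subseteq> {..<N} \<times> {..<N} \<and>
                  card A \<le> N \<and> card C \<le> N \<and> card (prod_pattern A C) \<le> Z \<and>
                  (\<forall>pos prog. valid_layout B A C pos \<longrightarrow> computes_product M B A C pos prog \<longrightarrow>
                     1/200 * min (real N ^ 2 / (real M * real B))
                             (real N * sqrt (real Z) / (sqrt (real M) * real B))
                       \<le> real (io_cost prog))"
  proof (cases "Z = 0")
    case True
    have m0: "min (real N ^ 2 / (real M * real B)) (real N * sqrt (real Z) / (sqrt (real M) * real B)) \<le> 0"
      using True by simp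
    have h: "1/200 * min (real N ^ 2 / (real M * real B))
                             (real N * sqrt (real Z) / (sqrt (real M) * real B)) \<le> real (io_cost prog)" for prog
    proof -
      have a: "1/200 * min (real N ^ 2 / (real M * real B)) (real N * sqrt (real Z) / (sqrt (real M) * real B)) \<le> 0"
        using m0 by (intro mult_nonneg_nonpos) auto
      show ?thesis by (rule order_trans[OF a]) simp
    qed
    have pp: "prod_pattern {} {} = {}" unfolding prod_pattern_def by simp
    show ?thesis
    proof (intro exI[of _ "{}"] conjI allI impI)
      fix pos prog
      show "1/200 * min (real N ^ 2 / (real M * real B))
                             (real N * sqrt (real Z) / (sqrt (real M) * real B)) \<le> real (io_cost prog)"
        by (rule h)
    qed (auto simp: pp)
  next
    case False
    define s where "s = nat (floor (sqrt (real Z)))"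
    have sq1: "1 \<le> sqrt (real Z)" using False by simp
    have fl1: "1 \<le> floor (sqrt (real Z))" using sq1 by simp
    have rs: "real s = of_int (floor (sqrt (real Z)))" unfolding s_def using fl1 by simp
    have s_le: "real s \<le> sqrt (real Z)" using rs by simp
    have s_gt: "sqrt (real Z) < real s + 1" using rs by linarith
    have s1: "1 \<le> s" unfolding s_def using fl1 by (subst le_nat_iff) auto
    have "real s * real s \<le> sqrt (real Z) * sqrt (real Z)" using s_le by (intro mult_mono) auto
    then have "real (s * s) \<le> real Z" by simp
    then have ssZ: "s * s \<le> Z" by (simp only: of_nat_le_iff)
    have sN: "s < N"
    proof (rule ccontr)
      assume "\<not> s < N"
      then have "N * N \<le> s * s" by (simp add: mult_le_mono)
      then show False using ssZ ZN by (simp add: power2_eq_square)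
    qed
    define t where "t = N div s"
    have t1: "1 \<le> t" unfolding t_def using sN s1 by (simp add: div_greater_zero_iff Suc_le_eq)
    have tN: "t \<le> N" unfolding t_def by simp
    have stN: "s * t \<le> N" unfolding t_def by (metis div_mult_mod_eq le_add1 mult.commute)
    have N2: "N \<le> 2 * s * t"
    proof -
      have e1: "N = t * s + N mod s" unfolding t_def by simp
      have e2: "N mod s < s" using s1 by simp
      have e3: "s \<le> t * s" using t1 by simp
      have "N \<le> 2 * (t * s)" using e1 e2 e3 by linarith
      then show ?thesis by (simp add: algebra_simps)
    qed
    define A where "A = {..<s} \<times> {..<t}"
    define C where "C = {..<t} \<times> {..<s}"
    have fA: "finite A" and fC: "finite C" unfolding A_def C_def by auto
    have AN: "A \<subseteq> {..<N} \<times> {..<N}" unfolding A_def using sN tN by auto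
    have CN: "C \<subseteq> {..<N} \<times> {..<N}" unfolding C_def using sN tN by auto
    have cA: "card A \<le> N" unfolding A_def using stN by (simp add: card_cartesian_product)
    have cC: "card C \<le> N" unfolding C_def using stN by (simp add: card_cartesian_product mult.commute)
    have "prod_pattern A C \<subseteq> {..<s} \<times> {..<s}" unfolding prod_pattern_def A_def C_def by auto
    then have "card (prod_pattern A C) \<le> card ({..<s} \<times> {..<s})" by (intro card_mono) auto
    then have cP: "card (prod_pattern A C) \<le> Z" using ssZ by (simp add: card_cartesian_product)
    have trip_eq: "trip A C UNIV = {..<s} \<times> {..<t} \<times> {..<s}" unfolding trip_def A_def C_def by auto
    have W: "card (trip A C UNIV) = s * (t * s)" unfolding trip_eq by (simp add: card_cartesian_product)
    have key: "real N * sqrt (real Z) \<le> 4 * real (card (trip A C UNIV))"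
    proof -
      have a: "sqrt (real Z) \<le> 2 * real s" using s_gt s1 by simp
      have b: "real N \<le> 2 * real s * real t"
      proof -
        have "real N \<le> real (2 * s * t)" using N2 by (rule of_nat_mono)
        then show ?thesis by simp
      qed
      have "real N * sqrt (real Z) \<le> real N * (2 * real s)" using a by (intro mult_left_mono) auto
      also have "\<dots> \<le> (2 * real s * real t) * (2 * real s)" using b by (intro mult_right_mono) auto
      also have "\<dots> = 4 * real (card (trip A C UNIV))" unfolding W by (simp add: algebra_simps)
      finally show ?thesis .
    qed
    have bound: "1/200 * min (real N ^ 2 / (real M * real B))
                             (real N * sqrt (real Z) / (sqrt (real M) * real B))
                       \<le> real (io_cost prog)"
      if comp: "computes_product M B A C pos prog" for pos prog
    proof -
      have mb: "real (card (trip A C UNIV)) \<le> 42 * real (io_cost prog) * real B * sqrt (real M)"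
        by (rule main_bound[OF fA fC M0 B0 comp])
      have den: "0 < sqrt (real M) * real B" using M0 B0 by simp
      have "real N * sqrt (real Z) \<le> 168 * real (io_cost prog) * (sqrt (real M) * real B)"
        using key mb by (simp add: algebra_simps)
      then have q: "real N * sqrt (real Z) / (sqrt (real M) * real B) \<le> 168 * real (io_cost prog)"
        using den by (simp add: pos_divide_le_eq)
      have "min (real N ^ 2 / (real M * real B)) (real N * sqrt (real Z) / (sqrt (real M) * real B))
            \<le> 168 * real (io_cost prog)" using q by linarith
      then show ?thesis by simp
    qed
    show ?thesis
      by (intro exI[of _ A] exI[of _ C] conjI allI impI AN CN cA cC cP bound) auto
  qed
qed

end
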